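(* Assume the standing assumptions (A) below. Let $\sigma_a\in\mathcal F_{\underline\sigma_a}^{\overline\sigma_a}(\Omega)$ and $\sigma_b\in\mathcal F_{\underline\sigma_b}^{\overline\sigma_b}(\Omega)$, and let $g\in L^\infty(\Gamma_-)$ with $\underline g:=\inf_{\Gamma_-}g$, $\overline g:=\sup_{\Gamma_-}g$ satisfy $\underline g>0$ and \[ \overline g\le\begin{cases}\inf_\Omega \dfrac{\sigma_a}{\sigma_b}, & \text{when } \sigma_s\equiv 0,\\[2mm] \max\Big(\inf_\Omega\dfrac{\sigma_a}{\sigma_b},\ 2\underline\theta\inf_\Omega\dfrac{\sigma_s}{\sigma_b}\Big), & \text{when }\sigma_s\ne 0.\end{cases} \] Let $u$ be the corresponding unique non-negative bounded solution of \[ \mathbf v\cdot\nabla u+(\sigma_a+\sigma_s)u+\sigma_b\langle u\rangle u=\sigma_s Ku\ \text{ in } X,\qquad u=g\ \text{ on }\Gamma_- . \] Then $u\ge\mathfrak c$ for some constant $\mathfrak c>0$.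
   Context: Let $d\ge 2$, $\Omega\subset\mathbb R^d$ a domain with unit outer normal $\boldsymbol\nu$, $\mathbb S^{d-1}$ the unit sphere with normalized surface measure $d\mathbf v$, $X:=\Omega\times\mathbb S^{d-1}$, $\Gamma_-:=\{(\mathbf x,\mathbf v)\in\partial\Omega\times\mathbb S^{d-1}: -\boldsymbol\nu(\mathbf x)\cdot\mathbf v>0\}$, and $\langle u\rangle(\mathbf x):=\int_{\mathbb S^{d-1}}u(\mathbf x,\mathbf v)d\mathbf v$. The scattering operator is $Ku(\mathbf x,\mathbf v):=\int_{\mathbb S^{d-1}}\Theta(\mathbf v,\mathbf v')u(\mathbf x,\mathbf v')d\mathbf v'$ with $\Theta$ symmetric and $\int\Theta(\mathbf v,\mathbf v')d\mathbf v'=\int\Theta(\mathbf v,\mathbf v')d\mathbf v=1$. For a set $Y$ and constants $0<\underline f\le\overline f<\infty$, $\mathcal F_{\underline f}^{\overline f}(Y):=\{f\in L^\infty(Y):\underline f\le f\le\overline f \text{ a.e.}\}$. Standing assumption (A): (i) $\Omega$ is bounded, convex and smooth; (ii) $\sigma_s\in\mathcal F_{\underline\sigma_s}^{\overline\sigma_s}(\Omega)$; (iii) $\Theta\in\mathcal F_{\underline\theta}^{\overline\theta}(\mathbb S^{d-1}\times\mathbb S^{d-1})$, with $\underline\theta$ the lower bound of $\Theta$. *)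

theory Defs
  imports "HOL-Analysis.Analysis"
begin

primrec Ck :: "nat \<Rightarrow> ('a::real_normed_vector \<Rightarrow> real) \<Rightarrow> bool" where
  "Ck 0 f = continuous_on UNIV f"
| "Ck (Suc k) f = (\<exists>f'. (\<forall>x. (f has_derivative f' x) (at x)) \<and> (\<forall>h. Ck k (\<lambda>x. f' x h)))"

definition smooth_fun :: "('a::real_normed_vector \<Rightarrow> real) \<Rightarrow> bool" where
  "smooth_fun f \<longleftrightarrow> (\<forall>k. Ck k f)"

definition defining_fun :: "(real^'n) set \<Rightarrow> (real^'n \<Rightarrow> real) \<Rightarrow> bool" where
  "defining_fun \<Omega> \<rho> \<longleftrightarrow> smooth_fun \<rho> \<and> (\<forall>x. x \<in> \<Omega> \<longleftrightarrow> \<rho> x < 0) \<and>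
     (\<forall>x\<in>frontier \<Omega>. \<rho> x = 0 \<and> frechet_derivative \<rho> (at x) \<noteq> (\<lambda>h. 0))"

definition smooth_boundary :: "(real^'n) set \<Rightarrow> bool" where
  "smooth_boundary \<Omega> \<longleftrightarrow> (\<exists>\<rho>. defining_fun \<Omega> \<rho>)"

definition outer_normal :: "(real^'n) set \<Rightarrow> real^'n \<Rightarrow> real^'n" where
  "outer_normal \<Omega> x =
     (let \<rho> = (SOME \<rho>. defining_fun \<Omega> \<rho>);
          gr = (\<chi> i. frechet_derivative \<rho> (at x) (axis i 1))
      in gr /\<^sub>R norm gr)"

definition bcs_domain :: "(real^'n) set \<Rightarrow> bool" where
  "bcs_domain \<Omega> \<longleftrightarrow> open \<Omega> \<and> connected \<Omega> \<and> \<Omega> \<noteq> {} \<and> bounded \<Omega> \<and> convex \<Omega> \<and> smooth_boundary \<Omega>"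

text \<open>Normalized surface measure on the unit sphere: push-forward of the uniform
probability measure on the unit ball under radial projection.\<close>
definition sph :: "(real^'n) measure" where
  "sph = distr (uniform_measure lborel (ball 0 1)) borel (\<lambda>x. x /\<^sub>R norm x)"

definition Om_meas :: "(real^'n) set \<Rightarrow> (real^'n) measure" where
  "Om_meas \<Omega> = restrict_space lborel \<Omega>"

definition X_meas :: "(real^'n) set \<Rightarrow> ((real^'n) \<times> (real^'n)) measure" where
  "X_meas \<Omega> = restrict_space (lborel \<Otimes>\<^sub>M sph) (\<Omega> \<times> sphere 0 1)"

definition Gamma_minus :: "(real^'n) set \<Rightarrow> ((real^'n) \<times> (real^'n)) set" where
  "Gamma_minus \<Omega> = {(x, v). x \<in> frontier \<Omega> \<and> v \<in> sphere 0 1 \<and> - (outer_normal \<Omega> x \<bullet> v) > 0}"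

definition tau :: "(real^'n) set \<Rightarrow> real^'n \<Rightarrow> real^'n \<Rightarrow> real" where
  "tau \<Omega> x v = Sup {t. 0 \<le> t \<and> (\<forall>s\<in>{0..t}. x - s *\<^sub>R v \<in> \<Omega>)}"

text \<open>A measure on Gamma_- (only its null sets matter here): push-forward of dx dv
under the backward exit map; it has the same null sets as the surface measure on Gamma_-.\<close>
definition Gamma_meas :: "(real^'n) set \<Rightarrow> ((real^'n) \<times> (real^'n)) measure" where
  "Gamma_meas \<Omega> = restrict_space
      (distr (X_meas \<Omega>) (borel \<Otimes>\<^sub>M borel) (\<lambda>(x, v). (x - tau \<Omega> x v *\<^sub>R v, v)))
      (Gamma_minus \<Omega>)"

definition ess_inf :: "'a measure \<Rightarrow> ('a \<Rightarrow> real) \<Rightarrow> real" where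
  "ess_inf M f = Sup {c. AE x in M. c \<le> f x}"

definition ess_sup :: "'a measure \<Rightarrow> ('a \<Rightarrow> real) \<Rightarrow> real" where
  "ess_sup M f = Inf {c. AE x in M. f x \<le> c}"

definition Linf :: "'a measure \<Rightarrow> ('a \<Rightarrow> real) \<Rightarrow> bool" where
  "Linf M f \<longleftrightarrow> f \<in> borel_measurable M \<and> (\<exists>B. AE x in M. \<bar>f x\<bar> \<le> B)"

definition F_class :: "'a measure \<Rightarrow> real \<Rightarrow> real \<Rightarrow> ('a \<Rightarrow> real) \<Rightarrow> bool" where
  "F_class M lo hi f \<longleftrightarrow> 0 < lo \<and> lo \<le> hi \<and> f \<in> borel_measurable M \<and>
      (AE x in M. lo \<le> f x \<and> f x \<le> hi)"

definition avg :: "(real^'n \<Rightarrow> real^'n \<Rightarrow> real) \<Rightarrow> real^'n \<Rightarrow> real" where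
  "avg u x = (\<integral>v. u x v \<partial>sph)"

definition Kop :: "(real^'n \<Rightarrow> real^'n \<Rightarrow> real) \<Rightarrow> (real^'n \<Rightarrow> real^'n \<Rightarrow> real)
                  \<Rightarrow> real^'n \<Rightarrow> real^'n \<Rightarrow> real" where
  "Kop \<Theta> u x v = (\<integral>v'. \<Theta> v v' * u x v' \<partial>sph)"

text \<open>Mild (integrated along characteristics) formulation of
  v.grad u + (sa + ss) u + sb <u> u = ss K u in X,  u = g on Gamma_-,
  for a non-negative bounded u.\<close>
definition is_solution ::
  "(real^'n) set \<Rightarrow> (real^'n \<Rightarrow> real) \<Rightarrow> (real^'n \<Rightarrow> real) \<Rightarrow> (real^'n \<Rightarrow> real)
   \<Rightarrow> (real^'n \<Rightarrow> real^'n \<Rightarrow> real) \<Rightarrow> (real^'n \<Rightarrow> real^'n \<Rightarrow> real)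
   \<Rightarrow> (real^'n \<Rightarrow> real^'n \<Rightarrow> real) \<Rightarrow> bool" where
  "is_solution \<Omega> sa ss sb \<Theta> g u \<longleftrightarrow>
     (\<lambda>(x, v). u x v) \<in> borel_measurable (lborel \<Otimes>\<^sub>M sph) \<and>
     (\<exists>B. AE z in X_meas \<Omega>. 0 \<le> u (fst z) (snd z) \<and> u (fst z) (snd z) \<le> B) \<and>
     (AE z in X_meas \<Omega>.
        u (fst z) (snd z) =
          g (fst z - tau \<Omega> (fst z) (snd z) *\<^sub>R snd z) (snd z)
          + (LINT s:{0..tau \<Omega> (fst z) (snd z)}|lborel.
               (let y = fst z - s *\<^sub>R snd z; v = snd z in
                  ss y * Kop \<Theta> u y v - (sa y + ss y + sb y * avg u y) * u y v)))"

end

theory Submission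
  imports Defs "HOL-Probability.Probability_Measure"
begin


lemma sets_sph[measurable_cong, simp]: "sets (sph :: (real^'n) measure) = sets borel"
  unfolding sph_def by simp

lemma space_sph[simp]: "space (sph :: (real^'n) measure) = UNIV"
  unfolding sph_def by simp

lemma prob_space_sph: "prob_space (sph :: (real^'n) measure)"
  unfolding sph_def
proof (rule prob_space.prob_space_distr)
  show "prob_space (uniform_measure lborel (ball (0::real^'n) 1))"
  using content_ball_pos[of 1 "0::real^'n"] emeasure_lborel_ball_finite[of "0::real^'n" 1]
    by (intro prob_space_uniform_measure) (auto simp: measure_def enn2real_positive_iff)
  show "(\<lambda>x::real^'n. x /\<^sub>R norm x) \<in> borel_measurable (uniform_measure lborel (ball 0 1))"
    by simp
qed

lemma AE_sph_sphere: "AE v in (sph :: (real^'n) measure). v \<in> sphere 0 1"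
proof -
  have m: "(\<lambda>x::real^'n. x /\<^sub>R norm x) \<in> measurable (uniform_measure lborel (ball 0 1)) borel"
    by simp
  have P: "{x \<in> space borel. x \<in> sphere (0::real^'n) 1} \<in> sets borel"
    by (simp add: borel_closed)
  have "AE x in lborel. x \<in> ball (0::real^'n) 1 \<longrightarrow> x /\<^sub>R norm x \<in> sphere 0 1"
    using AE_lborel_singleton[of "0::real^'n"] by (rule eventually_mono) simp
  then have "AE x in uniform_measure lborel (ball (0::real^'n) 1). x /\<^sub>R norm x \<in> sphere 0 1"
    by (intro AE_uniform_measureI) auto
  then show ?thesis unfolding sph_def by (subst AE_distr_iff[OF m P])
qed

lemma sets_lsph: "sets (lborel \<Otimes>\<^sub>M (sph :: (real^'n) measure)) = sets (borel :: ((real^'n) \<times> (real^'n)) measure)"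
proof -
  have "sets (lborel \<Otimes>\<^sub>M (sph :: (real^'n) measure)) = sets (borel \<Otimes>\<^sub>M (borel :: (real^'n) measure))"
    by (intro sets_pair_measure_cong) auto
  also have "\<dots> = sets borel" by (rule arg_cong[where f=sets, OF borel_prod])
  finally show ?thesis .
qed

lemma space_lsph[simp]: "space (lborel \<Otimes>\<^sub>M (sph :: (real^'n) measure)) = UNIV"
  by (simp add: space_pair_measure)

lemma OS_sets: "open (\<Omega> :: (real^'n) set) \<Longrightarrow> \<Omega> \<times> sphere 0 1 \<in> sets (lborel \<Otimes>\<^sub>M (sph :: (real^'n) measure))"
  by (intro pair_measureI) (auto simp: borel_open borel_closed)

lemma X_AE:
  fixes \<Omega> :: "(real^'n) set"
  assumes "open \<Omega>" "AE z in X_meas \<Omega>. P z"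
  shows "AE z in lborel \<Otimes>\<^sub>M sph. z \<in> \<Omega> \<times> sphere 0 1 \<longrightarrow> P z"
  using assms(2) unfolding X_meas_def
  by (subst (asm) AE_restrict_space_iff) (use OS_sets[OF assms(1)] in auto)

lemma X_AE_back:
  fixes \<Omega> :: "(real^'n) set"
  assumes "open \<Omega>" "AE z in lborel \<Otimes>\<^sub>M sph. P z"
  shows "AE z in X_meas \<Omega>. P z"
  using assms(2) unfolding X_meas_def
  by (subst AE_restrict_space_iff) (use OS_sets[OF assms(1)] in auto)

lemma AE_swap:
  assumes "AE z in lborel \<Otimes>\<^sub>M (sph :: (real^'n) measure). Q z"
  shows "AE v in sph. AE x in (lborel :: (real^'n) measure). Q (x, v)"
proof -
  interpret S: prob_space "sph :: (real^'n) measure" by (rule prob_space_sph)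
  interpret P1: pair_sigma_finite "lborel :: (real^'n) measure" "sph :: (real^'n) measure" ..
  interpret P2: pair_sigma_finite "sph :: (real^'n) measure" "lborel :: (real^'n) measure" ..
  have "AE z in distr (sph \<Otimes>\<^sub>M lborel) (lborel \<Otimes>\<^sub>M sph) (\<lambda>(x, y). (y, x)). Q z"
    using assms by (subst (asm) P1.distr_pair_swap)
  then have "AE z in sph \<Otimes>\<^sub>M (lborel :: (real^'n) measure). Q ((\<lambda>(x, y). (y, x)) z)"
    by (rule AE_distrD[OF measurable_pair_swap'])
  then have "AE v in sph. AE x in (lborel :: (real^'n) measure). Q ((\<lambda>(x, y). (y, x)) (v, x))"
    by (rule P2.AE_pair)
  then show ?thesis by simp
qed

lemma AE_back:
  assumes meas: "{z \<in> space (lborel \<Otimes>\<^sub>M (sph :: (real^'n) measure)). P z} \<in> sets (lborel \<Otimes>\<^sub>M sph)"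
    and ae: "AE v in sph. AE x in (lborel :: (real^'n) measure). P (x, v)"
  shows "AE z in lborel \<Otimes>\<^sub>M (sph :: (real^'n) measure). P z"
proof -
  interpret S: prob_space "sph :: (real^'n) measure" by (rule prob_space_sph)
  interpret P1: pair_sigma_finite "lborel :: (real^'n) measure" "sph :: (real^'n) measure" ..
  interpret P2: pair_sigma_finite "sph :: (real^'n) measure" "lborel :: (real^'n) measure" ..
  have m2: "{z \<in> space (sph \<Otimes>\<^sub>M (lborel :: (real^'n) measure)). P ((\<lambda>(x, y). (y, x)) z)} \<in> sets (sph \<Otimes>\<^sub>M lborel)"
  proof -
    have "{z \<in> space (sph \<Otimes>\<^sub>M (lborel :: (real^'n) measure)). P ((\<lambda>(x, y). (y, x)) z)} =
      (\<lambda>(x, y). (y, x)) -` {z \<in> space (lborel \<Otimes>\<^sub>M (sph :: (real^'n) measure)). P z} \<inter> space (sph \<Otimes>\<^sub>M lborel)"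
      by (auto simp: space_pair_measure)
    also have "\<dots> \<in> sets (sph \<Otimes>\<^sub>M lborel)" by (rule sets_pair_swap[OF meas])
    finally show ?thesis .
  qed
  have "AE z in sph \<Otimes>\<^sub>M (lborel :: (real^'n) measure). P ((\<lambda>(x, y). (y, x)) z)"
    by (rule P2.AE_pair_measure[OF m2]) (use ae in simp)
  then show ?thesis
    by (subst P1.distr_pair_swap, subst AE_distr_iff[OF measurable_pair_swap' meas]) 
qed

lemma Om_AE:
  fixes \<Omega> :: "(real^'n) set"
  assumes "open \<Omega>" "AE x in Om_meas \<Omega>. P x"
  shows "AE x in lborel. x \<in> \<Omega> \<longrightarrow> P x"
  using assms(2) unfolding Om_meas_def
  by (subst (asm) AE_restrict_space_iff) (use assms(1) in \<open>auto simp: borel_open\<close>)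


definition Sset :: "(real^'n) set \<Rightarrow> real^'n \<Rightarrow> real^'n \<Rightarrow> real set" where
  "Sset \<Omega> x v = {t. 0 \<le> t \<and> (\<forall>s\<in>{0..t}. x - s *\<^sub>R v \<in> \<Omega>)}"

lemma tau_Sset: "tau \<Omega> x v = Sup (Sset \<Omega> x v)"
  unfolding tau_def Sset_def by simp

lemma seg_in:
  fixes \<Omega> :: "(real^'n) set"
  assumes cvx: "convex \<Omega>" and x: "x \<in> \<Omega>" and t: "x - t *\<^sub>R v \<in> \<Omega>" and s: "0 \<le> s" "s \<le> t"
  shows "x - s *\<^sub>R v \<in> \<Omega>"
proof (cases "t = 0")
  case True then show ?thesis using s x by simp
next
  case False
  then have tp: "t > 0" using s by simp
  have "x - s *\<^sub>R v = (1 - s/t) *\<^sub>R x + (s/t) *\<^sub>R (x - t *\<^sub>R v)"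
    using tp by (simp add: algebra_simps)
  also have "\<dots> \<in> \<Omega>"
    using tp s by (intro convexD[OF cvx x t]) (auto simp: field_simps)
  finally show ?thesis .
qed

lemma bounded_line:
  fixes \<Omega> :: "(real^'n) set"
  assumes "bounded \<Omega>"
  obtains D where "D > 0" "\<And>x t v. x \<in> \<Omega> \<Longrightarrow> norm v = 1 \<Longrightarrow> x - t *\<^sub>R v \<in> \<Omega> \<Longrightarrow> \<bar>t\<bar> \<le> D"
proof -
  obtain R where R: "R > 0" "\<And>y. y \<in> \<Omega> \<Longrightarrow> norm y \<le> R"
    using assms bounded_pos by metis
  show ?thesis
  proof (rule that[of "2*R"])
    show "2*R > 0" using R by simp
    fix x t and v :: "real^'n"
    assume h: "x \<in> \<Omega>" "norm v = 1" "x - t *\<^sub>R v \<in> \<Omega>"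
    have "\<bar>t\<bar> = norm (x - (x - t *\<^sub>R v))" using h(2) by simp
    also have "\<dots> \<le> norm x + norm (x - t *\<^sub>R v)" by (rule norm_triangle_ineq4)
    also have "\<dots> \<le> 2*R" using R(2)[OF h(1)] R(2)[OF h(3)] by simp
    finally show "\<bar>t\<bar> \<le> 2*R" .
  qed
qed

locale dom_ctx =
  fixes \<Omega> :: "(real^'n) set" and x v :: "real^'n"
  assumes op: "open \<Omega>" and cvx: "convex \<Omega>" and bdd: "bounded \<Omega>"
    and x: "x \<in> \<Omega>" and v: "norm v = 1"
begin

lemma Sset_eq: "Sset \<Omega> x v = {t. 0 \<le> t \<and> x - t *\<^sub>R v \<in> \<Omega>}"
  unfolding Sset_def using seg_in[OF cvx x] by auto

lemma Sset_bdd: "bdd_above (Sset \<Omega> x v)"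
proof -
  obtain D where D: "D > 0" "\<And>x t v. x \<in> \<Omega> \<Longrightarrow> norm v = 1 \<Longrightarrow> x - t *\<^sub>R v \<in> \<Omega> \<Longrightarrow> \<bar>t\<bar> \<le> D"
    using bounded_line[OF bdd] by metis
  show ?thesis unfolding Sset_eq bdd_above_def
    using D(2)[OF x v] by (intro exI[of _ D]) force
qed

lemma Sset_0: "0 \<in> Sset \<Omega> x v"
  unfolding Sset_eq using x by simp

lemma tau_gt_iff:
  assumes a: "0 \<le> a"
  shows "a < tau \<Omega> x v \<longleftrightarrow> x - a *\<^sub>R v \<in> \<Omega>"
proof
  assume "a < tau \<Omega> x v"
  then obtain t where t: "t \<in> Sset \<Omega> x v" "a < t"
    unfolding tau_Sset using less_cSup_iff[OF _ Sset_bdd] Sset_0 by blast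
  then show "x - a *\<^sub>R v \<in> \<Omega>"
    unfolding Sset_def using a by auto
next
  assume h: "x - a *\<^sub>R v \<in> \<Omega>"
  obtain e where e: "e > 0" "ball (x - a *\<^sub>R v) e \<subseteq> \<Omega>"
    using op h open_contains_ball by blast
  have "x - (a + e/2) *\<^sub>R v \<in> ball (x - a *\<^sub>R v) e"
    using e v by (simp add: dist_norm algebra_simps)
  then have "a + e/2 \<in> Sset \<Omega> x v"
    unfolding Sset_eq using e a by auto
  then have "a + e/2 \<le> tau \<Omega> x v"
    unfolding tau_Sset by (rule cSup_upper[OF _ Sset_bdd])
  then show "a < tau \<Omega> x v" using e by simp
qed

lemma tau_pos: "0 < tau \<Omega> x v"
  using tau_gt_iff[of 0] x by simp

lemma exit_notin: "x - tau \<Omega> x v *\<^sub>R v \<notin> \<Omega>"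
  using tau_gt_iff[of "tau \<Omega> x v"] tau_pos by simp

lemma inside: "0 \<le> s \<Longrightarrow> s < tau \<Omega> x v \<Longrightarrow> x - s *\<^sub>R v \<in> \<Omega>"
  using tau_gt_iff by blast

lemma exit_frontier: "x - tau \<Omega> x v *\<^sub>R v \<in> frontier \<Omega>"
proof -
  let ?L = "tau \<Omega> x v"
  have "x - ?L *\<^sub>R v \<in> closure \<Omega>"
    unfolding closure_approachable
  proof (intro allI impI)
    fix e :: real assume e: "e > 0"
    let ?t = "max 0 (?L - e/2)"
    have "x - ?t *\<^sub>R v \<in> \<Omega>" using inside[of ?t] tau_pos e by simp
    moreover have "dist (x - ?t *\<^sub>R v) (x - ?L *\<^sub>R v) < e"
    proof -
      have "dist (x - ?t *\<^sub>R v) (x - ?L *\<^sub>R v) = \<bar>?L - ?t\<bar>"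
        using v by (simp add: dist_norm algebra_simps flip: scaleR_diff_left)
      also have "\<dots> < e" using e tau_pos by (auto simp: abs_if)
      finally show ?thesis .
    qed
    ultimately show "\<exists>y\<in>\<Omega>. dist y (x - ?L *\<^sub>R v) < e" by blast
  qed
  then show ?thesis
    using exit_notin op by (simp add: frontier_def interior_open)
qed

lemma tau_bound: "\<exists>D>0. \<forall>x' v'. x' \<in> \<Omega> \<longrightarrow> norm v' = 1 \<longrightarrow> tau \<Omega> x' v' \<le> D"
proof -
  obtain D where D: "D > 0" "\<And>x t v. x \<in> \<Omega> \<Longrightarrow> norm v = 1 \<Longrightarrow> x - t *\<^sub>R v \<in> \<Omega> \<Longrightarrow> \<bar>t\<bar> \<le> D"
    using bounded_line[OF bdd] by metis
  have "tau \<Omega> x' v' \<le> D" if h: "x' \<in> \<Omega>" "norm v' = 1" for x' v'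
  proof -
    interpret c2: dom_ctx \<Omega> x' v' using h op cvx bdd by unfold_locales auto
    show ?thesis
    proof (rule ccontr)
      assume "\<not> tau \<Omega> x' v' \<le> D"
      then have "x' - ((D + tau \<Omega> x' v')/2) *\<^sub>R v' \<in> \<Omega>"
        using c2.tau_gt_iff[of "(D + tau \<Omega> x' v')/2"] D(1) by simp
      then have "\<bar>(D + tau \<Omega> x' v')/2\<bar> \<le> D" using D(2)[OF h] by blast
      then show False using \<open>\<not> tau \<Omega> x' v' \<le> D\<close> by simp
    qed
  qed
  then show ?thesis using D(1) by blast
qed

lemma tau_shift:
  assumes s: "0 \<le> s" "s < tau \<Omega> x v"
  shows "tau \<Omega> (x - s *\<^sub>R v) v = tau \<Omega> x v - s"
proof -
  have y: "x - s *\<^sub>R v \<in> \<Omega>" using inside s by blast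
  interpret c2: dom_ctx \<Omega> "x - s *\<^sub>R v" v using y op cvx bdd v by unfold_locales auto
  have key: "a < tau \<Omega> (x - s *\<^sub>R v) v \<longleftrightarrow> a < tau \<Omega> x v - s" if a: "0 \<le> a" for a
  proof -
    have "a < tau \<Omega> (x - s *\<^sub>R v) v \<longleftrightarrow> x - s *\<^sub>R v - a *\<^sub>R v \<in> \<Omega>" by (rule c2.tau_gt_iff[OF a])
    also have "x - s *\<^sub>R v - a *\<^sub>R v = x - (s + a) *\<^sub>R v" by (simp add: algebra_simps)
    also have "(\<dots> \<in> \<Omega>) \<longleftrightarrow> s + a < tau \<Omega> x v" using tau_gt_iff[of "s+a"] a s by simp
    finally show ?thesis by arith
  qed
  show ?thesis
  proof (rule antisym)
    show "tau \<Omega> (x - s *\<^sub>R v) v \<le> tau \<Omega> x v - s"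
      using key[of "tau \<Omega> x v - s"] s by (auto simp: not_less[symmetric])
    show "tau \<Omega> x v - s \<le> tau \<Omega> (x - s *\<^sub>R v) v"
      using key[of "tau \<Omega> (x - s *\<^sub>R v) v"] c2.tau_pos by (auto simp: not_less[symmetric])
  qed
qed

lemma exit_shift:
  assumes s: "0 \<le> s" "s < tau \<Omega> x v"
  shows "(x - s *\<^sub>R v) - tau \<Omega> (x - s *\<^sub>R v) v *\<^sub>R v = x - tau \<Omega> x v *\<^sub>R v"
  by (simp add: tau_shift[OF s] scaleR_diff_left)

lemma exit_Gamma:
  assumes sb: "smooth_boundary \<Omega>"
  shows "(x - tau \<Omega> x v *\<^sub>R v, v) \<in> Gamma_minus \<Omega>"
proof -
  let ?L = "tau \<Omega> x v"
  define p where "p = x - ?L *\<^sub>R v"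
  define \<rho> where "\<rho> = (SOME \<rho>. defining_fun \<Omega> \<rho>)"
  have dfn: "defining_fun \<Omega> \<rho>" unfolding \<rho>_def using sb unfolding smooth_boundary_def by (rule someI_ex)
  then have sm: "smooth_fun \<rho>" and inn: "\<And>y. y \<in> \<Omega> \<longleftrightarrow> \<rho> y < 0"
    and fr: "\<And>y. y \<in> frontier \<Omega> \<Longrightarrow> \<rho> y = 0 \<and> frechet_derivative \<rho> (at y) \<noteq> (\<lambda>h. 0)"
    unfolding defining_fun_def by auto
  have pf: "p \<in> frontier \<Omega>" unfolding p_def by (rule exit_frontier)
  have pcl: "p \<in> closure \<Omega>" using pf by (simp add: frontier_def)
  define d where "d = frechet_derivative \<rho> (at p)"
  from sm have "Ck (Suc 0) \<rho>" unfolding smooth_fun_def by blast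
  then obtain f' where f': "\<And>y. (\<rho> has_derivative f' y) (at y)" by auto
  have dd: "(\<rho> has_derivative d) (at p)"
    unfolding d_def using f'[of p] frechet_derivative_at by metis
  have lin: "linear d" using dd has_derivative_linear by blast
  have rp: "\<rho> p = 0" and dnz: "d \<noteq> (\<lambda>h. 0)" using fr[OF pf] unfolding d_def by auto
  have A: "d (y - p) \<le> 0" if y: "y \<in> \<Omega>" for y
  proof (rule ccontr)
    assume "\<not> d (y - p) \<le> 0"
    then have pos: "0 < d (y - p)" by simp
    let ?w = "y - p"
    have "((\<lambda>t. p + t *\<^sub>R ?w) has_derivative (\<lambda>t. t *\<^sub>R ?w)) (at 0)"
      by (auto intro!: derivative_eq_intros)
    then have "((\<rho> \<circ> (\<lambda>t. p + t *\<^sub>R ?w)) has_derivative (d \<circ> (\<lambda>t. t *\<^sub>R ?w))) (at 0)"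
      using dd by (intro diff_chain_at) auto
    moreover have "(d \<circ> (\<lambda>t. t *\<^sub>R ?w)) = (*) (d ?w)"
      using lin by (auto simp: linear_scale)
    ultimately have "((\<lambda>t. \<rho> (p + t *\<^sub>R ?w)) has_field_derivative d ?w) (at 0)"
      unfolding has_field_derivative_def by (simp add: o_def)
    from DERIV_pos_inc_right[OF this pos] obtain \<delta> where \<delta>: "\<delta> > 0"
      "\<And>h. 0 < h \<Longrightarrow> h < \<delta> \<Longrightarrow> \<rho> (p + 0 *\<^sub>R ?w) < \<rho> (p + (0 + h) *\<^sub>R ?w)" by blast
    let ?h = "min (\<delta>/2) 1"
    have "\<rho> p < \<rho> (p + ?h *\<^sub>R ?w)" using \<delta>(2)[of ?h] \<delta>(1) by simp
    moreover have "p + ?h *\<^sub>R ?w \<in> \<Omega>"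
    proof -
      have "p - ?h *\<^sub>R (p - y) \<in> interior \<Omega>"
        using \<delta>(1) by (intro mem_interior_closure_convex_shrink[OF cvx _ pcl]) (auto simp: interior_open[OF op] y)
      then show ?thesis by (simp add: interior_open[OF op] algebra_simps)
    qed
    ultimately show False using inn rp by fastforce
  qed
  obtain w where w: "0 < d w"
  proof -
    have "\<exists>w. d w \<noteq> 0" using dnz by auto
    then obtain w0 where "d w0 \<noteq> 0" by blast
    then show ?thesis
      using that[of w0] that[of "- w0"] linear_neg[OF lin, of w0] by (cases "d w0 > 0") auto
  qed
  obtain e where e: "e > 0" "ball x e \<subseteq> \<Omega>" using op x open_contains_ball by blast
  define \<delta> where "\<delta> = e / (2 * (norm w + 1))"
  have \<delta>: "\<delta> > 0" "\<delta> * norm w < e"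
  proof -
    have n1: "norm w + 1 > 0" by (smt (verit) norm_ge_zero)
    show "\<delta> > 0" unfolding \<delta>_def using e n1 by simp
    have eq1: "\<delta> * norm w = (e * norm w) / (2 * (norm w + 1))" by (simp add: \<delta>_def)
    have eq2: "(e/2) * (norm w / (norm w + 1)) = (e * norm w) / (2 * (norm w + 1))" by simp
    note eq = eq1 eq2[symmetric]
    have "norm w / (norm w + 1) \<le> 1" using n1 by (simp add: divide_le_eq_1)
    then have "(e/2) * (norm w / (norm w + 1)) \<le> (e/2) * 1" using e by (intro mult_left_mono) auto
    then show "\<delta> * norm w < e" using eq1 eq2 e by linarith
  qed
  have "x + \<delta> *\<^sub>R w \<in> \<Omega>" using e \<delta> by (intro subsetD[OF e(2)]) (simp add: dist_norm)
  have "x + \<delta> *\<^sub>R w - p = (x - p) + \<delta> *\<^sub>R w" by simp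
  with A[OF \<open>x + \<delta> *\<^sub>R w \<in> \<Omega>\<close>] have "d (x - p) + \<delta> * d w \<le> 0"
    using lin by (simp add: linear_add linear_scale)
  then have "d (x - p) < 0" using \<delta> w by (smt (verit) mult_pos_pos)
  moreover have "x - p = ?L *\<^sub>R v" unfolding p_def by simp
  ultimately have dv: "d v < 0" using lin tau_pos by (simp add: linear_scale mult_less_0_iff)
  define gr where "gr = (\<chi> i. d (axis i 1))"
  have "gr \<bullet> v = d v"
  proof -
    have "d v = d (\<Sum>i\<in>UNIV. v$i *\<^sub>R axis i 1)"
      by (metis (no_types) basis_expansion scalar_mult_eq_scaleR)
    also have "\<dots> = (\<Sum>i\<in>UNIV. v$i * d (axis i 1))"
      using lin by (simp add: linear_sum linear_scale)
    also have "\<dots> = gr \<bullet> v" unfolding gr_def inner_vec_def by (simp add: mult.commute)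
    finally show ?thesis by simp
  qed
  then have gv: "gr \<bullet> v < 0" using dv by simp
  then have "gr \<noteq> 0" by auto
  then have ng: "norm gr > 0" by simp
  have "outer_normal \<Omega> p = gr /\<^sub>R norm gr"
    unfolding outer_normal_def Let_def gr_def d_def \<rho>_def by simp
  then have "outer_normal \<Omega> p \<bullet> v = (gr \<bullet> v) / norm gr" by (simp add: divide_inverse_commute)
  then have "outer_normal \<Omega> p \<bullet> v < 0" using gv ng by (simp add: divide_neg_pos)
  then show ?thesis
    using pf v unfolding Gamma_minus_def p_def by simp
qed

end



lemma space_X: "space (X_meas \<Omega>) = \<Omega> \<times> sphere (0::real^'n) 1"
  unfolding X_meas_def by (simp add: space_restrict_space)

lemma sets_X_iff:
  fixes \<Omega> :: "(real^'n) set"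
  assumes "open \<Omega>"
  shows "A \<in> sets (X_meas \<Omega>) \<longleftrightarrow> A \<subseteq> \<Omega> \<times> sphere 0 1 \<and> A \<in> sets borel"
  unfolding X_meas_def
  by (subst sets_restrict_space_iff) (use OS_sets[OF assms] sets_lsph in auto)

lemma tau_meas:
  fixes \<Omega> :: "(real^'n) set"
  assumes op: "open \<Omega>" and cvx: "convex \<Omega>" and bdd: "bounded \<Omega>"
  shows "(\<lambda>z. tau \<Omega> (fst z) (snd z)) \<in> borel_measurable (X_meas \<Omega>)"
  unfolding borel_measurable_iff_greater
proof
  fix a :: real
  show "{w \<in> space (X_meas \<Omega>). a < tau \<Omega> (fst w) (snd w)} \<in> sets (X_meas \<Omega>)"
  proof -
    have key: "a < tau \<Omega> x v \<longleftrightarrow> (0 > a \<or> x - a *\<^sub>R v \<in> \<Omega>)" if h: "x \<in> \<Omega>" "v \<in> sphere 0 1" for x v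
    proof -
      interpret c: dom_ctx \<Omega> x v using h op cvx bdd by unfold_locales auto
      show ?thesis using c.tau_gt_iff[of a] c.tau_pos by (cases "a < 0") auto
    qed
    have eq: "{w \<in> space (X_meas \<Omega>). a < tau \<Omega> (fst w) (snd w)} =
      (\<Omega> \<times> sphere 0 1) \<inter> {w. 0 > a \<or> fst w - a *\<^sub>R snd w \<in> \<Omega>}"
      unfolding space_X using key by auto
    have "open ((\<lambda>w::((real^'n) \<times> (real^'n)). fst w - a *\<^sub>R snd w) -` \<Omega>)"
      by (intro continuous_open_vimage op) (auto intro!: continuous_intros)
    then have "(\<lambda>w::((real^'n) \<times> (real^'n)). fst w - a *\<^sub>R snd w) -` \<Omega> \<in> sets borel" by (rule borel_open)
    then have "{w::((real^'n) \<times> (real^'n)). 0 > a \<or> fst w - a *\<^sub>R snd w \<in> \<Omega>} \<in> sets borel"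
      by (cases "a < 0") (auto simp: vimage_def)
    moreover have "\<Omega> \<times> sphere 0 1 \<in> sets (borel :: ((real^'n) \<times> (real^'n)) measure)"
      using OS_sets[OF op] sets_lsph by auto
    ultimately have "(\<Omega> \<times> sphere 0 1) \<inter> {w::((real^'n) \<times> (real^'n)). 0 > a \<or> fst w - a *\<^sub>R snd w \<in> \<Omega>} \<in> sets borel"
      by (intro sets.Int)
    then show ?thesis unfolding eq sets_X_iff[OF op] by blast
  qed
qed


lemma exit_meas:
  fixes \<Omega> :: "(real^'n) set"
  assumes op: "open \<Omega>" and cvx: "convex \<Omega>" and bdd: "bounded \<Omega>"
  shows "(\<lambda>(x, v). (x - tau \<Omega> x v *\<^sub>R v, v)) \<in> measurable (X_meas \<Omega>) (borel \<Otimes>\<^sub>M borel)"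
proof -
  note [measurable] = tau_meas[OF assms]
  have f: "fst \<in> borel_measurable (X_meas \<Omega>)" "snd \<in> borel_measurable (X_meas \<Omega>)"
    unfolding X_meas_def by (intro measurable_restrict_space1; simp)+
  note [measurable] = f
  have "(\<lambda>z. (fst z - tau \<Omega> (fst z) (snd z) *\<^sub>R snd z, snd z)) \<in> measurable (X_meas \<Omega>) (borel \<Otimes>\<^sub>M borel)"
    by measurable
  then show ?thesis by (simp add: case_prod_beta')
qed


lemma Gamma_sets:
  fixes \<Omega> :: "(real^'n) set"
  assumes sb: "smooth_boundary \<Omega>"
  shows "Gamma_minus \<Omega> \<in> sets (borel \<Otimes>\<^sub>M borel)"
proof -
  define \<rho> where "\<rho> = (SOME \<rho>. defining_fun \<Omega> \<rho>)"
  have dfn: "defining_fun \<Omega> \<rho>" unfolding \<rho>_def using sb unfolding smooth_boundary_def by (rule someI_ex)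
  then have sm: "smooth_fun \<rho>" unfolding defining_fun_def by auto
  from sm have "Ck (Suc 0) \<rho>" unfolding smooth_fun_def by blast
  then obtain f' where f': "\<And>y. (\<rho> has_derivative f' y) (at y)" and c: "\<And>h. continuous_on UNIV (\<lambda>y. f' y h)"
    by auto
  define gr where "gr = (\<lambda>y. \<chi> i. f' y (axis i 1))"
  have "continuous_on UNIV gr" unfolding gr_def by (intro continuous_on_vec_lambda c)
  then have [measurable]: "gr \<in> borel_measurable borel" by (rule borel_measurable_continuous_onI)
  have on: "outer_normal \<Omega> = (\<lambda>y. gr y /\<^sub>R norm (gr y))"
  proof
    fix y
    have "frechet_derivative \<rho> (at y) = f' y" using frechet_derivative_at[OF f'[of y]] by simp
    then show "outer_normal \<Omega> y = gr y /\<^sub>R norm (gr y)"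
      unfolding outer_normal_def Let_def gr_def \<rho>_def[symmetric] by simp
  qed
  have [measurable]: "outer_normal \<Omega> \<in> borel_measurable borel" unfolding on by measurable
  have [measurable]: "frontier \<Omega> \<in> sets borel" by (rule borel_closed) simp
  have [measurable]: "sphere (0::real^'n) 1 \<in> sets borel" by (rule borel_closed) simp
  have "Gamma_minus \<Omega> = {z \<in> space (borel \<Otimes>\<^sub>M borel). fst z \<in> frontier \<Omega> \<and> snd z \<in> sphere 0 1 \<and> 0 < - (outer_normal \<Omega> (fst z) \<bullet> snd z)}"
    unfolding Gamma_minus_def by (auto simp: space_pair_measure)
  also have "\<dots> \<in> sets (borel \<Otimes>\<^sub>M borel)" by measurable
  finally show ?thesis .
qed


lemma line_null:
  fixes N :: "(real^'n) set" and v :: "real^'n"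
  assumes N: "N \<in> sets lborel" "emeasure lborel N = 0"
  shows "AE x in lborel. AE s in (lborel::real measure). x - s *\<^sub>R v \<notin> N"
proof -
  have Nb[measurable]: "N \<in> sets borel" using N by simp
  let ?f = "\<lambda>z::((real^'n) \<times> real). indicator N (fst z - snd z *\<^sub>R v) :: ennreal"
  have mf[measurable]: "?f \<in> borel_measurable (lborel \<Otimes>\<^sub>M lborel)" by measurable
  have inner: "(\<integral>\<^sup>+x. indicator N (x - s *\<^sub>R v) \<partial>lborel) = 0" for s
  proof -
    have "(\<integral>\<^sup>+x. indicator N (x - s *\<^sub>R v) \<partial>lborel) = (\<integral>\<^sup>+x. indicator N ((- (s *\<^sub>R v)) + x) \<partial>lborel)"
      by simp
    also have "\<dots> = (\<integral>\<^sup>+y. indicator N y \<partial>(distr lborel borel ((+) (- (s *\<^sub>R v)))))"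
      by (subst nn_integral_distr) auto
    also have "\<dots> = (\<integral>\<^sup>+y. indicator N y \<partial>lborel)" by (simp only: lborel_distr_plus)
    also have "\<dots> = 0" using N by simp
    finally show ?thesis .
  qed
  have "(\<integral>\<^sup>+x. (\<integral>\<^sup>+s. ?f (x, s) \<partial>lborel) \<partial>lborel) = (\<integral>\<^sup>+s. (\<integral>\<^sup>+x. ?f (x, s) \<partial>lborel) \<partial>lborel)"
    using lborel_pair.Fubini[OF mf] by simp
  also have "\<dots> = 0" by (simp add: inner)
  finally have "AE x in lborel. (\<integral>\<^sup>+s. ?f (x, s) \<partial>lborel) = 0"
    by (subst (asm) nn_integral_0_iff_AE) (auto intro!: lborel.borel_measurable_nn_integral_fst mf)
  then show ?thesis
  proof (rule eventually_mono)
    fix x assume "(\<integral>\<^sup>+s. ?f (x, s) \<partial>lborel) = 0"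
    then have "AE s in lborel. ?f (x, s) = 0"
      by (subst (asm) nn_integral_0_iff_AE) auto
    then show "AE s in lborel. x - s *\<^sub>R v \<notin> N"
      by (rule eventually_mono) (simp add: indicator_def split: if_splits)
  qed
qed


lemma ode_lower:
  fixes F :: "real \<Rightarrow> real" and G M L :: real
  assumes L: "0 \<le> L" and M: "0 < M" and G: "0 \<le> G"
    and int: "set_integrable lborel {0..L} F"
    and ae: "AE s in lborel. s \<in> {0..L} \<longrightarrow> - M * (G + (LINT t:{s..L}|lborel. F t)) \<le> F s"
  shows "G * exp (- M * L) \<le> G + (LINT t:{0..L}|lborel. F t)"
proof -
  have sub: "set_integrable lborel {s..L} F" if "0 \<le> s" for s
    using that by (intro set_integrable_subset[OF int]) auto
  have LH: "(LINT t:{s..L}|lborel. F t) = integral {s..L} F" if "0 \<le> s" for s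
    using set_borel_integral_eq_integral(2)[OF sub[OF that]] .
  have Fi: "F integrable_on {0..L}" using set_borel_integral_eq_integral(1)[OF int] .
  define \<psi> where "\<psi> s = G + integral {s..L} F" for s
  have psi_eq: "\<psi> s = G + integral {0..L} F - integral {0..s} F" if "s \<in> {0..L}" for s
    using Henstock_Kurzweil_Integration.integral_combine[where a=0 and c=s and b=L and f=F] that Fi unfolding \<psi>_def by auto
  have cI: "continuous_on {0..L} (\<lambda>s. integral {0..s} F)"
    by (rule indefinite_integral_continuous_1[OF Fi])
  have cpsi: "continuous_on {0..L} \<psi>"
  proof -
    have "continuous_on {0..L} (\<lambda>s. G + integral {0..L} F - integral {0..s} F)"
      by (intro continuous_intros cI)
    then show ?thesis by (rule continuous_on_cong[THEN iffD1, rotated 2]) (auto simp: psi_eq)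
  qed
  have psiI: "\<psi> integrable_on {0..L}" by (rule integrable_continuous_real[OF cpsi])
  define \<Phi> where "\<Phi> s = integral {s..L} \<psi>" for s
  have Phi_eq: "\<Phi> s = integral {0..L} \<psi> - integral {0..s} \<psi>" if "s \<in> {0..L}" for s
    using Henstock_Kurzweil_Integration.integral_combine[where a=0 and c=s and b=L and f=\<psi>] that psiI unfolding \<Phi>_def by auto
  define c0 where "c0 = \<psi> 0 + M * \<Phi> 0"
  have key: "\<psi> s \<le> c0 - M * \<Phi> s" if s: "s \<in> {0..L}" for s
  proof -
    have Fs: "F integrable_on {0..s}" using s by (intro integrable_on_subinterval[OF Fi]) auto
    have ps: "\<psi> integrable_on {0..s}" using s by (intro integrable_on_subinterval[OF psiI]) auto
    have e1: "\<psi> 0 - \<psi> s = integral {0..s} F" using psi_eq[of 0] psi_eq[of s] s L by simp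
    have e2: "\<Phi> 0 - \<Phi> s = integral {0..s} \<psi>" using Phi_eq[of 0] Phi_eq[of s] s L by simp
    have e3: "integral {0..s} F + M * integral {0..s} \<psi> = integral {0..s} (\<lambda>t. F t + M * \<psi> t)"
    proof -
      have "(\<lambda>t. M * \<psi> t) integrable_on {0..s}" using integrable_on_cmult_left[OF ps, of M] by simp
      then have "integral {0..s} (\<lambda>t. F t + M * \<psi> t) = integral {0..s} F + integral {0..s} (\<lambda>t. M * \<psi> t)"
        using Fs by (rule Henstock_Kurzweil_Integration.integral_add[rotated])
      also have "integral {0..s} (\<lambda>t. M * \<psi> t) = M * integral {0..s} \<psi>"
        using integral_mult[OF ps, of M] by simp
      finally show ?thesis by simp
    qed
    have cps: "continuous_on {0..s} \<psi>" using s by (intro continuous_on_subset[OF cpsi]) auto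
    have si: "set_integrable lborel {0..s} (\<lambda>t. F t + M * \<psi> t)"
    proof -
      have "set_integrable lborel {0..s} F" using s by (intro set_integrable_subset[OF int]) auto
      moreover have "set_integrable lborel {0..s} (\<lambda>t. M * \<psi> t)"
        using borel_integrable_atLeastAtMost'[OF cps] by (intro set_integrable_mult_right)
      ultimately show ?thesis by (rule set_integral_add(1))
    qed
    have "0 \<le> (LINT t:{0..s}|lborel. F t + M * \<psi> t)"
      unfolding set_lebesgue_integral_def
    proof (rule integral_nonneg_AE)
      show "AE t in lborel. 0 \<le> indicator {0..s} t *\<^sub>R (F t + M * \<psi> t)"
        using ae
      proof (rule eventually_mono)
        fix t assume h: "t \<in> {0..L} \<longrightarrow> - M * (G + (LINT u:{t..L}|lborel. F u)) \<le> F t"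
        show "0 \<le> indicator {0..s} t *\<^sub>R (F t + M * \<psi> t)"
        proof (cases "t \<in> {0..s}")
          case True
          then have "t \<in> {0..L}" using s by auto
          with h have "- M * \<psi> t \<le> F t" unfolding \<psi>_def using LH[of t] by auto
          then show ?thesis using True by simp
        qed simp
      qed
    qed
    also have "\<dots> = integral {0..s} (\<lambda>t. F t + M * \<psi> t)"
      by (rule set_borel_integral_eq_integral(2)[OF si])
    finally show ?thesis using e1 e2 e3 unfolding c0_def by (simp add: algebra_simps)
  qed
  have PhiL: "\<Phi> L = 0" unfolding \<Phi>_def by simp
  have psiL: "\<psi> L = G" unfolding \<psi>_def by simp
  have c0G: "G \<le> c0" using key[of L] L PhiL psiL by simp
  define D where "D s = exp (- M * s) * (\<Phi> s - c0 / M)" for s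
  have cPhi: "continuous_on {0..L} \<Phi>"
  proof -
    have "continuous_on {0..L} (\<lambda>s. integral {0..L} \<psi> - integral {0..s} \<psi>)"
      by (intro continuous_intros indefinite_integral_continuous_1[OF psiI])
    then show ?thesis by (rule continuous_on_cong[THEN iffD1, rotated 2]) (auto simp: Phi_eq)
  qed
  have "D 0 \<le> D L"
  proof (rule DERIV_nonneg_imp_increasing_open[OF L])
    show "continuous_on {0..L} D" unfolding D_def by (intro continuous_intros cPhi)
    fix s assume s: "0 < s" "s < L"
    have int_s: "s \<in> interior {0..L}" using s by simp
    have "((\<lambda>u. integral {0..u} \<psi>) has_vector_derivative \<psi> s) (at s within {0..L})"
      using s by (intro integral_has_vector_derivative[OF cpsi]) auto
    then have d1: "((\<lambda>u. integral {0..u} \<psi>) has_real_derivative \<psi> s) (at s)"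
      using at_within_interior[OF int_s] by (simp add: has_real_derivative_iff_has_vector_derivative)
    have "((\<lambda>u. integral {0..L} \<psi> - integral {0..u} \<psi>) has_real_derivative - \<psi> s) (at s)"
      using d1 by (auto intro!: derivative_eq_intros)
    then have d2: "(\<Phi> has_real_derivative - \<psi> s) (at s)"
      by (rule has_field_derivative_transform_within_open[where S="{0<..<L}"]) (use s in \<open>auto simp: Phi_eq\<close>)
    have "(D has_real_derivative
        (exp (- M * s) * (- M)) * (\<Phi> s - c0 / M) + exp (- M * s) * (- \<psi> s)) (at s)"
      unfolding D_def using d2 by (auto intro!: derivative_eq_intros)
    moreover have "0 \<le> (exp (- M * s) * (- M)) * (\<Phi> s - c0 / M) + exp (- M * s) * (- \<psi> s)"
    proof -
      have "(exp (- M * s) * (- M)) * (\<Phi> s - c0 / M) + exp (- M * s) * (- \<psi> s)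
          = exp (- M * s) * (c0 - M * \<Phi> s - \<psi> s)" using M by (simp add: field_simps)
      moreover have "0 \<le> c0 - M * \<Phi> s - \<psi> s" using key[of s] s by simp
      ultimately show ?thesis by simp
    qed
    ultimately show "\<exists>y. (D has_real_derivative y) (at s) \<and> 0 \<le> y" by blast
  qed
  then have "\<Phi> 0 - c0 / M \<le> exp (- M * L) * (- c0 / M)" unfolding D_def PhiL by simp
  then have m1: "M * (\<Phi> 0 - c0 / M) \<le> M * (exp (- M * L) * (- c0 / M))"
    using M by (intro mult_left_mono) auto
  have e1: "M * (\<Phi> 0 - c0 / M) = M * \<Phi> 0 - c0" using M by (simp add: right_diff_distrib)
  have e2: "M * (exp (- M * L) * (- c0 / M)) = - (exp (- M * L) * c0)" using M by simp
  have "M * \<Phi> 0 \<le> c0 - exp (- M * L) * c0" using m1 e1 e2 by linarith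
  then have "c0 * exp (- M * L) \<le> \<psi> 0" unfolding c0_def by (simp add: algebra_simps)
  moreover have "G * exp (- M * L) \<le> c0 * exp (- M * L)" using c0G by (simp add: mult_right_mono)
  moreover have "\<psi> 0 = G + (LINT t:{0..L}|lborel. F t)" unfolding \<psi>_def using LH[of 0] by simp
  ultimately show ?thesis by linarith
qed


lemma lint_shift:
  fixes F :: "real \<Rightarrow> real"
  shows "(LINT \<sigma>:{0..L-s}|lborel. F (s + \<sigma>)) = (LINT t:{s..L}|lborel. F t)"
proof -
  have "(LINT t:{s..L}|lborel. F t) = (\<integral>t. indicator {s..L} t *\<^sub>R F t \<partial>lborel)"
    unfolding set_lebesgue_integral_def ..
  also have "\<dots> = \<bar>1\<bar> *\<^sub>R (\<integral>x. indicator {s..L} (s + 1 * x) *\<^sub>R F (s + 1 * x) \<partial>lborel)"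
    by (rule lborel_integral_real_affine[where c=1 and t=s]) simp
  also have "\<dots> = (\<integral>x. indicator {0..L-s} x *\<^sub>R F (s + x) \<partial>lborel)"
    by (simp only: abs_one scaleR_one mult_1) (intro Bochner_Integration.integral_cong refl, auto simp: indicator_def)
  finally show ?thesis unfolding set_lebesgue_integral_def by simp
qed

lemma ess_inf_pos:
  fixes M :: "'a measure" and f :: "'a \<Rightarrow> real"
  assumes "Linf M f" "ess_inf M f > 0"
  obtains c where "c > 0" "AE x in M. c \<le> f x"
proof -
  let ?S = "{c. AE x in M. c \<le> f x}"
  obtain Bg where Bg: "AE x in M. \<bar>f x\<bar> \<le> Bg" using assms(1) unfolding Linf_def by blast
  have "AE x in M. -Bg \<le> f x" using Bg by (rule eventually_mono) auto
  then have ne: "-Bg \<in> ?S" by simp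
  have "\<exists>c\<in>?S. 0 < c"
  proof (cases "bdd_above ?S")
    case True
    then show ?thesis using assms(2) unfolding ess_inf_def
      using less_cSup_iff[of ?S 0] ne by blast
  next
    case False
    then show ?thesis unfolding bdd_above_def by (metis not_le order.strict_trans1 zero_le_one)
  qed
  then show ?thesis using that by blast
qed

lemma line_bound:
  fixes \<Omega> :: "(real^'n) set" and g u :: "real^'n \<Rightarrow> real^'n \<Rightarrow> real" and Fx :: "real^'n \<Rightarrow> real"
    and x v :: "real^'n" and N :: "(real^'n) set"
  assumes op: "open \<Omega>" and cvx: "convex \<Omega>" and bdd: "bounded \<Omega>"
    and x: "x \<in> \<Omega>" and v: "norm v = 1" and M: "0 < M" and cg: "0 \<le> cg"
    and Gx: "cg \<le> g (x - tau \<Omega> x v *\<^sub>R v) v"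
    and good: "\<And>y. y \<in> \<Omega> \<Longrightarrow> y \<notin> N \<Longrightarrow>
        u y v = g (y - tau \<Omega> y v *\<^sub>R v) v + (LINT s:{0..tau \<Omega> y v}|lborel. Fx (y - s *\<^sub>R v))
        \<and> - M * u y v \<le> Fx y"
    and eqx: "u x v = g (x - tau \<Omega> x v *\<^sub>R v) v + (LINT s:{0..tau \<Omega> x v}|lborel. Fx (x - s *\<^sub>R v))"
    and line: "AE s in lborel. x - s *\<^sub>R v \<notin> N"
  shows "cg * exp (- M * tau \<Omega> x v) \<le> u x v"
proof -
  interpret dom_ctx \<Omega> x v using op cvx bdd x v by unfold_locales
  define L where "L = tau \<Omega> x v"
  define G where "G = g (x - L *\<^sub>R v) v"
  define F where "F t = Fx (x - t *\<^sub>R v)" for t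
  have L0: "0 < L" unfolding L_def by (rule tau_pos)
  have cgG: "cg \<le> G" using Gx unfolding G_def L_def .
  have ex1: "exp (- M * L) \<le> 1" using M L0 by simp
  have ux: "u x v = G + (LINT t:{0..L}|lborel. F t)" using eqx unfolding G_def L_def F_def .
  have "cg * exp (- M * L) \<le> G * exp (- M * L)" using cgG by (simp add: mult_right_mono)
  also have "G * exp (- M * L) \<le> u x v"
  proof (cases "set_integrable lborel {0..L} F")
    case False
    then have "(LINT t:{0..L}|lborel. F t) = 0"
      unfolding set_lebesgue_integral_def set_integrable_def by (rule not_integrable_integral_eq)
    then have "u x v = G" using ux by simp
    moreover have "G * exp (- M * L) \<le> G" using ex1 cgG cg by (simp add: mult_left_le)
    ultimately show ?thesis by simp
  next
    case True
    have ae: "AE s in lborel. s \<in> {0..L} \<longrightarrow> - M * (G + (LINT t:{s..L}|lborel. F t)) \<le> F s"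
      using line AE_lborel_singleton[of L]
    proof (eventually_elim)
      case (elim s)
      show ?case
      proof
        assume s: "s \<in> {0..L}"
        then have s2: "0 \<le> s" "s < L" using elim by auto
        then have xs: "x - s *\<^sub>R v \<in> \<Omega>" using inside unfolding L_def by blast
        from good[OF xs elim(1)] have
          eqs: "u (x - s *\<^sub>R v) v = g (x - s *\<^sub>R v - tau \<Omega> (x - s *\<^sub>R v) v *\<^sub>R v) v +
             (LINT \<sigma>:{0..tau \<Omega> (x - s *\<^sub>R v) v}|lborel. Fx (x - s *\<^sub>R v - \<sigma> *\<^sub>R v))"
          and bd: "- M * u (x - s *\<^sub>R v) v \<le> Fx (x - s *\<^sub>R v)" by auto
        have t1: "tau \<Omega> (x - s *\<^sub>R v) v = L - s" using tau_shift s2 unfolding L_def by blast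
        have t2: "x - s *\<^sub>R v - tau \<Omega> (x - s *\<^sub>R v) v *\<^sub>R v = x - L *\<^sub>R v"
          using exit_shift s2 unfolding L_def by blast
        have t3: "Fx (x - s *\<^sub>R v - \<sigma> *\<^sub>R v) = F (s + \<sigma>)" for \<sigma>
          unfolding F_def by (simp add: algebra_simps)
        have "u (x - s *\<^sub>R v) v = G + (LINT \<sigma>:{0..L-s}|lborel. F (s + \<sigma>))"
          using eqs unfolding t2 unfolding t1 t3 G_def .
        also have "\<dots> = G + (LINT t:{s..L}|lborel. F t)" by (simp add: lint_shift)
        finally show "- M * (G + (LINT t:{s..L}|lborel. F t)) \<le> F s"
          using bd unfolding F_def by simp
      qed
    qed
    have "G * exp (- M * L) \<le> G + (LINT t:{0..L}|lborel. F t)"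
      by (rule ode_lower[OF less_imp_le[OF L0] M _ True ae]) (use cgG cg in simp)
    then show ?thesis using ux by simp
  qed
  finally show ?thesis unfolding L_def .
qed

lemma F_bound:
  fixes \<Theta> u :: "real^'n \<Rightarrow> real^'n \<Rightarrow> real" and sa ss sb :: "real^'n \<Rightarrow> real"
  assumes TH: "AE v' in sph. 0 \<le> \<Theta> v v'"
    and uAE: "AE v' in sph. 0 \<le> u y v' \<and> u y v' \<le> Bp"
    and Bp: "0 \<le> Bp" and ss: "0 \<le> ss y" "ss y \<le> ssh" and sa: "sa y \<le> sah"
    and sb: "0 \<le> sb y" "sb y \<le> sbh" and u0: "0 \<le> u y v"
    and M: "sah + ssh + sbh * Bp \<le> M"
  shows "- M * u y v \<le> ss y * Kop \<Theta> u y v - (sa y + ss y + sb y * avg u y) * u y v"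
proof -
  interpret S: prob_space "sph :: (real^'n) measure" by (rule prob_space_sph)
  have K: "0 \<le> Kop \<Theta> u y v" unfolding Kop_def
    by (rule integral_nonneg_AE) (use TH uAE in \<open>eventually_elim, auto\<close>)
  have A: "avg u y \<le> Bp"
  proof (cases "integrable sph (\<lambda>v'. u y v')")
    case True
    show ?thesis unfolding avg_def
      using integral_mono_AE'[where M=sph and f="\<lambda>_. Bp" and g="\<lambda>v'. u y v'"] uAE Bp
      using S.prob_space by (auto elim: eventually_mono)
  next
    case False
    then show ?thesis unfolding avg_def using Bp by (simp add: not_integrable_integral_eq)
  qed
  have "sb y * avg u y \<le> sb y * Bp" using A sb by (intro mult_left_mono) auto
  also have "\<dots> \<le> sbh * Bp" using sb Bp by (intro mult_right_mono) auto
  finally have b: "sa y + ss y + sb y * avg u y \<le> M" using M sa ss by linarith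
  have "(sa y + ss y + sb y * avg u y) * u y v \<le> M * u y v" using b u0 by (rule mult_right_mono)
  moreover have "0 \<le> ss y * Kop \<Theta> u y v" using ss K by simp
  ultimately show ?thesis by linarith
qed

theorem corollary2p3:
  fixes \<Omega> :: "(real^'n) set"
    and sa ss sb :: "real^'n \<Rightarrow> real"
    and \<Theta> g u :: "real^'n \<Rightarrow> real^'n \<Rightarrow> real"
    and sa_lo sa_hi ss_lo ss_hi sb_lo sb_hi th_lo th_hi :: real
  assumes dim: "CARD('n) \<ge> 2"
    and dom: "bcs_domain \<Omega>"
    and ss: "(ss \<in> borel_measurable (Om_meas \<Omega>) \<and> (AE x in Om_meas \<Omega>. ss x = 0)) \<or> F_class (Om_meas \<Omega>) ss_lo ss_hi ss"
    and Theta_F: "F_class (sph \<Otimes>\<^sub>M sph) th_lo th_hi (\<lambda>(v, v'). \<Theta> v v')"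
    and Theta_sym: "AE z in sph \<Otimes>\<^sub>M sph. \<Theta> (fst z) (snd z) = \<Theta> (snd z) (fst z)"
    and Theta_norm1: "AE v in sph. (\<integral>v'. \<Theta> v v' \<partial>sph) = 1"
    and Theta_norm2: "AE v' in sph. (\<integral>v. \<Theta> v v' \<partial>sph) = 1"
    and sa: "F_class (Om_meas \<Omega>) sa_lo sa_hi sa"
    and sb: "F_class (Om_meas \<Omega>) sb_lo sb_hi sb"
    and g: "Linf (Gamma_meas \<Omega>) (\<lambda>(x, v). g x v)"
    and g_lo: "ess_inf (Gamma_meas \<Omega>) (\<lambda>(x, v). g x v) > 0"
    and g_hi: "if (AE x in Om_meas \<Omega>. ss x = 0)
               then ess_sup (Gamma_meas \<Omega>) (\<lambda>(x, v). g x v)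
                      \<le> ess_inf (Om_meas \<Omega>) (\<lambda>x. sa x / sb x)
               else ess_sup (Gamma_meas \<Omega>) (\<lambda>(x, v). g x v)
                      \<le> max (ess_inf (Om_meas \<Omega>) (\<lambda>x. sa x / sb x))
                             (2 * th_lo * ess_inf (Om_meas \<Omega>) (\<lambda>x. ss x / sb x))"
    and sol: "is_solution \<Omega> sa ss sb \<Theta> g u"
  shows "\<exists>c>0. AE z in X_meas \<Omega>. u (fst z) (snd z) \<ge> c"
proof -
  have op: "open \<Omega>" and cvx: "convex \<Omega>" and bdd: "bounded \<Omega>" and ne: "\<Omega> \<noteq> {}"
    and sbd: "smooth_boundary \<Omega>"
    using dom unfolding bcs_domain_def by auto
  interpret S: prob_space "sph :: (real^'n) measure" by (rule prob_space_sph)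
  interpret P1: pair_sigma_finite "lborel :: (real^'n) measure" "sph :: (real^'n) measure" ..
  interpret P3: pair_sigma_finite "sph :: (real^'n) measure" "sph :: (real^'n) measure" ..
  define FF where "FF y w = ss y * Kop \<Theta> u y w - (sa y + ss y + sb y * avg u y) * u y w" for y w
  define Ex where "Ex = (\<lambda>(x::real^'n, w::real^'n). (x - tau \<Omega> x w *\<^sub>R w, w))"
  have umeas: "(\<lambda>(x, v). u x v) \<in> borel_measurable (lborel \<Otimes>\<^sub>M sph)"
    and exB: "\<exists>B. AE z in X_meas \<Omega>. 0 \<le> u (fst z) (snd z) \<and> u (fst z) (snd z) \<le> B"
    and eqAE: "AE z in X_meas \<Omega>.
        u (fst z) (snd z) =
          g (fst z - tau \<Omega> (fst z) (snd z) *\<^sub>R snd z) (snd z)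
          + (LINT s:{0..tau \<Omega> (fst z) (snd z)}|lborel.
               (let y = fst z - s *\<^sub>R snd z; v = snd z in
                  ss y * Kop \<Theta> u y v - (sa y + ss y + sb y * avg u y) * u y v))"
    using sol unfolding is_solution_def by auto
  obtain B where uB: "AE z in X_meas \<Omega>. 0 \<le> u (fst z) (snd z) \<and> u (fst z) (snd z) \<le> B"
    using exB by blast
  define Bp where "Bp = max B 0"
  have Bp0: "0 \<le> Bp" unfolding Bp_def by simp
  obtain cg where cg: "cg > 0" and gAE: "AE w in Gamma_meas \<Omega>. cg \<le> (\<lambda>(x, v). g x v) w"
    using ess_inf_pos[OF g g_lo] by blast
  have "AE w in distr (X_meas \<Omega>) (borel \<Otimes>\<^sub>M borel) Ex. w \<in> Gamma_minus \<Omega> \<longrightarrow> cg \<le> (\<lambda>(x, v). g x v) w"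
    using gAE unfolding Gamma_meas_def Ex_def
    by (subst (asm) AE_restrict_space_iff) (auto simp: Gamma_sets[OF sbd] space_pair_measure)
  then have gX: "AE z in X_meas \<Omega>. Ex z \<in> Gamma_minus \<Omega> \<longrightarrow> cg \<le> (\<lambda>(x, v). g x v) (Ex z)"
    by (rule AE_distrD[OF exit_meas[OF op cvx bdd, folded Ex_def]])
  define P where "P z = ((0 \<le> u (fst z) (snd z) \<and> u (fst z) (snd z) \<le> Bp) \<and>
      u (fst z) (snd z) = g (fst z - tau \<Omega> (fst z) (snd z) *\<^sub>R snd z) (snd z)
          + (LINT s:{0..tau \<Omega> (fst z) (snd z)}|lborel. FF (fst z - s *\<^sub>R snd z) (snd z)) \<and>
      ((fst z - tau \<Omega> (fst z) (snd z) *\<^sub>R snd z, snd z) \<in> Gamma_minus \<Omega> \<longrightarrow>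
         cg \<le> g (fst z - tau \<Omega> (fst z) (snd z) *\<^sub>R snd z) (snd z)))" for z
  have PX: "AE z in X_meas \<Omega>. P z"
    using uB eqAE gX
  proof eventually_elim
    case (elim z)
    then show ?case unfolding P_def FF_def Ex_def Bp_def by (auto simp: Let_def case_prod_beta)
  qed
  have Pl: "AE z in lborel \<Otimes>\<^sub>M sph. z \<in> \<Omega> \<times> sphere 0 1 \<longrightarrow> P z" by (rule X_AE[OF op PX])
  have A1: "AE v in sph. AE x in lborel. (x, v) \<in> \<Omega> \<times> sphere 0 1 \<longrightarrow> P (x, v)"
    by (rule AE_swap[OF Pl])
  have A2: "AE x in lborel. AE v in sph. (x, v) \<in> \<Omega> \<times> sphere 0 1 \<longrightarrow> P (x, v)"
    by (rule P1.AE_pair[OF Pl])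
  have saAE: "AE x in lborel. x \<in> \<Omega> \<longrightarrow> sa x \<le> sa_hi"
    using sa unfolding F_class_def by (intro Om_AE[OF op]) (auto elim: eventually_mono)
  have sbAE: "AE x in lborel. x \<in> \<Omega> \<longrightarrow> 0 \<le> sb x \<and> sb x \<le> sb_hi"
    using sb unfolding F_class_def by (intro Om_AE[OF op]) (auto elim: eventually_mono)
  have ssAE: "AE x in lborel. x \<in> \<Omega> \<longrightarrow> 0 \<le> ss x \<and> ss x \<le> \<bar>ss_hi\<bar>"
  proof (intro Om_AE[OF op])
    show "AE x in Om_meas \<Omega>. 0 \<le> ss x \<and> ss x \<le> \<bar>ss_hi\<bar>"
      using ss
    proof
      assume "ss \<in> borel_measurable (Om_meas \<Omega>) \<and> (AE x in Om_meas \<Omega>. ss x = 0)"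
      then show ?thesis by (auto elim: eventually_mono)
    next
      assume "F_class (Om_meas \<Omega>) ss_lo ss_hi ss"
      then show ?thesis unfolding F_class_def by (auto elim: eventually_mono)
    qed
  qed
  define Q where "Q x = (x \<in> \<Omega> \<longrightarrow> (AE v' in sph. 0 \<le> u x v' \<and> u x v' \<le> Bp) \<and> sa x \<le> sa_hi \<and>
      0 \<le> sb x \<and> sb x \<le> sb_hi \<and> 0 \<le> ss x \<and> ss x \<le> \<bar>ss_hi\<bar>)" for x
  have AQ: "AE x in lborel. Q x"
    using A2 saAE sbAE ssAE
  proof eventually_elim
    case (elim x)
    show ?case unfolding Q_def
    proof
      assume x: "x \<in> \<Omega>"
      have "AE v' in sph. 0 \<le> u x v' \<and> u x v' \<le> Bp"
        using elim(1) AE_sph_sphere by eventually_elim (use x in \<open>auto simp: P_def\<close>)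
      then show "(AE v' in sph. 0 \<le> u x v' \<and> u x v' \<le> Bp) \<and> sa x \<le> sa_hi \<and>
          0 \<le> sb x \<and> sb x \<le> sb_hi \<and> 0 \<le> ss x \<and> ss x \<le> \<bar>ss_hi\<bar>"
        using elim x by auto
    qed
  qed
  have ATh: "AE v in sph. AE v' in sph. 0 \<le> \<Theta> v v'"
  proof -
    have "AE z in sph \<Otimes>\<^sub>M sph. 0 \<le> \<Theta> (fst z) (snd z)"
      using Theta_F unfolding F_class_def by (auto elim!: eventually_mono simp: case_prod_beta)
    from P3.AE_pair[OF this] show ?thesis by simp
  qed
  have sah0: "0 < sa_hi" and sbh0: "0 < sb_hi" using sa sb unfolding F_class_def by auto
  define M where "M = sa_hi + \<bar>ss_hi\<bar> + sb_hi * Bp + 1"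
  have M0: "0 < M" unfolding M_def using sah0 sbh0 Bp0 by (smt (verit) abs_ge_zero mult_nonneg_nonneg)
  have Mb: "sa_hi + \<bar>ss_hi\<bar> + sb_hi * Bp \<le> M" unfolding M_def by simp
  obtain x0 where x0: "x0 \<in> \<Omega>" using ne by blast
  obtain i0 :: 'n where True by blast
  have nv0: "norm (axis i0 (1::real)) = 1" by simp
  interpret c0: dom_ctx \<Omega> x0 "axis i0 1" using op cvx bdd x0 nv0 by unfold_locales
  obtain D where D: "D > 0" "\<And>x' v'. x' \<in> \<Omega> \<Longrightarrow> norm v' = 1 \<Longrightarrow> tau \<Omega> x' v' \<le> D"
    using c0.tau_bound by blast
  define c where "c = cg * exp (- M * D)"
  have c0: "c > 0" unfolding c_def using cg by simp
  have AQv: "AE v in (sph :: (real^'n) measure). AE x in lborel. Q x" by (rule AE_I2) (rule AQ)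
  have main: "AE v in sph. AE x in lborel. (x, v) \<in> \<Omega> \<times> sphere 0 1 \<longrightarrow> c \<le> u x v"
    using A1 ATh AQv
  proof eventually_elim
    case (elim v)
    note ThV = elim(2)
    show ?case
    proof (cases "v \<in> sphere 0 1")
      case False
      then show ?thesis by simp
    next
      case True
      then have nv: "norm v = 1" by simp
      define Good where "Good x = (x \<in> \<Omega> \<longrightarrow> P (x, v) \<and> Q x)" for x
      have "AE x in lborel. Good x" using elim(1) elim(3) by eventually_elim (use True in \<open>auto simp: Good_def\<close>)
      then obtain N where N: "{x \<in> space lborel. \<not> Good x} \<subseteq> N" "emeasure lborel N = 0" "N \<in> sets lborel"
        by (rule AE_E)
      have line: "AE x in lborel. AE s in (lborel::real measure). x - s *\<^sub>R v \<notin> N"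
        by (rule line_null[OF N(3) N(2)])
      have goodN: "\<And>y. y \<notin> N \<Longrightarrow> Good y" using N(1) by auto
      show ?thesis using line \<open>AE x in lborel. Good x\<close>
      proof eventually_elim
        case (elim x)
        show ?case
        proof
          assume xv: "(x, v) \<in> \<Omega> \<times> sphere 0 1"
          then have x: "x \<in> \<Omega>" by simp
          interpret cx: dom_ctx \<Omega> x v using op cvx bdd x nv by unfold_locales
          have Px: "P (x, v)" using elim(2) x unfolding Good_def by simp
          have Gx: "cg \<le> g (x - tau \<Omega> x v *\<^sub>R v) v"
            using Px cx.exit_Gamma[OF sbd] unfolding P_def by simp
          have eqx: "u x v = g (x - tau \<Omega> x v *\<^sub>R v) v + (LINT s:{0..tau \<Omega> x v}|lborel. FF (x - s *\<^sub>R v) v)"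
            using Px unfolding P_def by simp
          have goodF: "u y v = g (y - tau \<Omega> y v *\<^sub>R v) v + (LINT s:{0..tau \<Omega> y v}|lborel. FF (y - s *\<^sub>R v) v) \<and>
                - M * u y v \<le> FF y v" if y: "y \<in> \<Omega>" "y \<notin> N" for y
          proof -
            have Py: "P (y, v)" and Qy: "Q y" using goodN[OF y(2)] y(1) unfolding Good_def by auto
            have uAE: "AE v' in sph. 0 \<le> u y v' \<and> u y v' \<le> Bp"
              and f1: "sa y \<le> sa_hi" "0 \<le> sb y" "sb y \<le> sb_hi" "0 \<le> ss y" "ss y \<le> \<bar>ss_hi\<bar>"
              using Qy y unfolding Q_def by auto
            have u0: "0 \<le> u y v" using Py unfolding P_def by simp
            have "- M * u y v \<le> FF y v" unfolding FF_def
              by (rule F_bound[where ss=ss and sa=sa and sb=sb and u=u and y=y and v=v and \<Theta>=\<Theta>, OF ThV uAE Bp0 f1(4) f1(5) f1(1) f1(2) f1(3) u0 Mb])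
            then show ?thesis using Py unfolding P_def by simp
          qed
          have "cg * exp (- M * tau \<Omega> x v) \<le> u x v"
            by (rule line_bound[where Fx="\<lambda>y. FF y v" and u=u and g=g and v=v and x=x and \<Omega>=\<Omega> and N=N and M=M and cg=cg, OF op cvx bdd x nv M0 less_imp_le[OF cg] Gx goodF eqx elim(1)])
          moreover have "c \<le> cg * exp (- M * tau \<Omega> x v)"
            unfolding c_def using D(2)[OF x nv] M0 cg by (intro mult_left_mono) auto
          ultimately show "c \<le> u x v" by linarith
        qed
      qed
    qed
  qed
  have um[measurable]: "(\<lambda>z. u (fst z) (snd z)) \<in> borel_measurable (lborel \<Otimes>\<^sub>M sph)"
    using umeas by (simp add: case_prod_unfold)
  have os[measurable]: "\<Omega> \<times> sphere (0::real^'n) 1 \<in> sets (lborel \<Otimes>\<^sub>M sph)" by (rule OS_sets[OF op])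
  have "{z \<in> space (lborel \<Otimes>\<^sub>M sph). z \<in> \<Omega> \<times> sphere 0 1 \<longrightarrow> c \<le> u (fst z) (snd z)} \<in> sets (lborel \<Otimes>\<^sub>M sph)"
    by measurable
  from AE_back[OF this] main
  have "AE z in lborel \<Otimes>\<^sub>M sph. z \<in> \<Omega> \<times> sphere 0 1 \<longrightarrow> c \<le> u (fst z) (snd z)" by simp
  then have "AE z in X_meas \<Omega>. z \<in> \<Omega> \<times> sphere 0 1 \<longrightarrow> c \<le> u (fst z) (snd z)" by (rule X_AE_back[OF op])
  then have "AE z in X_meas \<Omega>. c \<le> u (fst z) (snd z)"
    using AE_space[of "X_meas \<Omega>"] by eventually_elim (auto simp: space_X)
  then show ?thesis using c0 by blast
qed


end
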